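(* Let $D$ be a finite distributive lattice with exactly two coatoms and let $Q=D\setminus\{1_D\}$. Then there is no algebra $A$ with a lattice isomorphism $\phi\colon\mathrm{Con}(A)\to D$ such that $\phi(\mathrm{Princ}(A))=Q$.
   Context: For an algebra $A$, $\mathrm{Con}(A)$ is its congruence lattice and $\mathrm{Princ}(A)$ its set of principal congruences $\mathrm{con}(a,b)$, $a,b\in A$. *)

theory Defs
  imports Main
begin

text \<open>A (universal) algebra is a carrier set A together with a set F of finitary
  operations, each given as a pair (arity n, f) where f acts on argument lists of
  length n; the operations must map the carrier into itself.\<close>

definition is_algebra :: "'a set \<Rightarrow> (nat \<times> ('a list \<Rightarrow> 'a)) set \<Rightarrow> bool" where
  "is_algebra A F \<longleftrightarrow>
     (\<forall>(n, f) \<in> F. \<forall>xs. length xs = n \<and> set xs \<subseteq> A \<longrightarrow> f xs \<in> A)"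

definition congruences :: "'a set \<Rightarrow> (nat \<times> ('a list \<Rightarrow> 'a)) set \<Rightarrow> 'a rel set" where
  "congruences A F = {\<theta>. equiv A \<theta> \<and>
     (\<forall>(n, f) \<in> F. \<forall>xs ys. length xs = n \<and> length ys = n \<and>
        list_all2 (\<lambda>x y. (x, y) \<in> \<theta>) xs ys \<longrightarrow> (f xs, f ys) \<in> \<theta>)}"

definition con :: "'a set \<Rightarrow> (nat \<times> ('a list \<Rightarrow> 'a)) set \<Rightarrow> 'a \<Rightarrow> 'a \<Rightarrow> 'a rel" where
  "con A F a b = \<Inter> {\<theta> \<in> congruences A F. (a, b) \<in> \<theta>}"

definition principal_congruences :: "'a set \<Rightarrow> (nat \<times> ('a list \<Rightarrow> 'a)) set \<Rightarrow> 'a rel set" where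
  "principal_congruences A F = {con A F a b | a b. a \<in> A \<and> b \<in> A}"

definition coatom :: "'d::bounded_lattice \<Rightarrow> bool" where
  "coatom c \<longleftrightarrow> c \<noteq> top \<and> (\<forall>x. c \<le> x \<longrightarrow> x = c \<or> x = top)"

end

theory Submission
  imports Defs
begin

lemma full_cong:
  assumes "is_algebra A F"
  shows "A \<times> A \<in> congruences A F"
proof -
  have "equiv A (A \<times> A)" by (auto simp: equiv_def refl_on_def sym_def trans_def)
  moreover have "(f xs, f ys) \<in> A \<times> A" if
    nf: "(n, f) \<in> F" and l: "length xs = n" "length ys = n" and la: "list_all2 (\<lambda>x y. (x, y) \<in> A \<times> A) xs ys" for n f xs ys
  proof -
    have "set xs \<subseteq> A" "set ys \<subseteq> A" using la
      by (auto simp: list_all2_conv_all_nth in_set_conv_nth)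
    then show "(f xs, f ys) \<in> A \<times> A" using assms nf l unfolding is_algebra_def by auto
  qed
  ultimately show ?thesis unfolding congruences_def by fastforce
qed

lemma inter_cong:
  assumes "S \<subseteq> congruences A F" "S \<noteq> {}"
  shows "\<Inter>S \<in> congruences A F"
proof -
  have eq: "\<And>\<theta>. \<theta> \<in> S \<Longrightarrow> equiv A \<theta>" using assms(1) unfolding congruences_def by auto
  obtain \<theta>0 where t0: "\<theta>0 \<in> S" using assms(2) by auto
  have "equiv A (\<Inter>S)"
  proof (rule equivI)
    show "\<Inter>S \<subseteq> A \<times> A" using eq[OF t0] t0 unfolding equiv_def by blast
    show "refl_on A (\<Inter>S)" using eq unfolding equiv_def refl_on_def by blast
    show "sym (\<Inter>S)" using eq unfolding equiv_def sym_def by blast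
    show "trans (\<Inter>S)" using eq unfolding equiv_def trans_def by blast
  qed
  moreover have "(f xs, f ys) \<in> \<theta>" if
    nf: "(n, f) \<in> F" and l: "length xs = n" "length ys = n" and la: "list_all2 (\<lambda>x y. (x, y) \<in> \<Inter>S) xs ys" and th: "\<theta> \<in> S" for n f xs ys \<theta>
  proof -
    have "list_all2 (\<lambda>x y. (x, y) \<in> \<theta>) xs ys"
      using la by (rule list_all2_mono) (use th in auto)
    then show "(f xs, f ys) \<in> \<theta>" using assms(1) th nf l unfolding congruences_def by fastforce
  qed
  ultimately show ?thesis unfolding congruences_def by fastforce
qed

lemma below_coatom:
  fixes x :: "'d::{finite, bounded_lattice}"
  assumes "x \<noteq> top"
  shows "\<exists>c. coatom c \<and> x \<le> c"
proof -
  obtain m where m: "m \<in> {y. y \<noteq> top}" "x \<le> m" "\<forall>b\<in>{y. y \<noteq> top}. m \<le> b \<longrightarrow> m = b"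
    using finite_has_maximal2[of "{y::'d. y \<noteq> top}" x] assms by auto
  have "coatom m" unfolding coatom_def using m by auto
  then show ?thesis using m by auto
qed

theorem mainTheorem12:
  fixes A :: "'a set" and F :: "(nat \<times> ('a list \<Rightarrow> 'a)) set"
    and \<phi> :: "'a rel \<Rightarrow> 'd::{finite, distrib_lattice, bounded_lattice}"
  assumes "card {c :: 'd. coatom c} = 2"
  shows "\<not> (is_algebra A F \<and>
             bij_betw \<phi> (congruences A F) (UNIV :: 'd set) \<and>
             (\<forall>\<theta>\<in>congruences A F. \<forall>\<psi>\<in>congruences A F. \<theta> \<subseteq> \<psi> \<longleftrightarrow> \<phi> \<theta> \<le> \<phi> \<psi>) \<and>
             \<phi> ` principal_congruences A F = UNIV - {top})"
proof
  assume H: "is_algebra A F \<and>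
             bij_betw \<phi> (congruences A F) (UNIV :: 'd set) \<and>
             (\<forall>\<theta>\<in>congruences A F. \<forall>\<psi>\<in>congruences A F. \<theta> \<subseteq> \<psi> \<longleftrightarrow> \<phi> \<theta> \<le> \<phi> \<psi>) \<and>
             \<phi> ` principal_congruences A F = UNIV - {top}"
  have alg: "is_algebra A F" using H by blast
  have bij: "bij_betw \<phi> (congruences A F) UNIV" using H by blast
  have ord: "\<And>\<theta> \<psi>. \<theta> \<in> congruences A F \<Longrightarrow> \<psi> \<in> congruences A F \<Longrightarrow> \<theta> \<subseteq> \<psi> \<longleftrightarrow> \<phi> \<theta> \<le> \<phi> \<psi>"
    using H by blast
  have pr: "\<phi> ` principal_congruences A F = UNIV - {top}" using H by blast
  obtain c1 c2 :: 'd where cs: "c1 \<noteq> c2" "{c. coatom c} = {c1, c2}"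
    using assms by (auto simp: card_2_iff)
  have co1: "coatom c1" and co2: "coatom c2" using cs by auto
  obtain a1 where a1: "a1 \<in> congruences A F" "\<phi> a1 = c1" using bij by (metis bij_betw_iff_bijections UNIV_I)
  obtain a2 where a2: "a2 \<in> congruences A F" "\<phi> a2 = c2" using bij by (metis bij_betw_iff_bijections UNIV_I)
  have full: "A \<times> A \<in> congruences A F" using full_cong[OF alg] .
  have cover: "(x, y) \<in> a1 \<or> (x, y) \<in> a2" if xy: "x \<in> A" "y \<in> A" for x y
  proof -
    let ?t = "con A F x y"
    have tc: "?t \<in> congruences A F" unfolding con_def
      by (rule inter_cong) (use full xy in auto)
    have xyt: "(x, y) \<in> ?t" unfolding con_def by auto
    have "?t \<in> principal_congruences A F" unfolding principal_congruences_def using xy by auto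
    then have "\<phi> ?t \<noteq> top" using pr by blast
    then obtain c where "coatom c" "\<phi> ?t \<le> c" using below_coatom by blast
    moreover have "c = c1 \<or> c = c2" using cs \<open>coatom c\<close> by blast
    ultimately have "\<phi> ?t \<le> \<phi> a1 \<or> \<phi> ?t \<le> \<phi> a2" using a1 a2 by auto
    then have "?t \<subseteq> a1 \<or> ?t \<subseteq> a2" using ord tc a1 a2 by blast
    then show ?thesis using xyt by blast
  qed
  have notfull: "\<exists>x y. x \<in> A \<and> y \<in> A \<and> (x, y) \<notin> a" if a: "a \<in> congruences A F" "coatom (\<phi> a)" for a
  proof (rule ccontr)
    assume "\<not> ?thesis"
    then have "\<forall>\<psi>\<in>congruences A F. \<psi> \<subseteq> a"
      unfolding congruences_def equiv_def by blast
    then have "\<forall>\<psi>\<in>congruences A F. \<phi> \<psi> \<le> \<phi> a" using ord a by blast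
    moreover obtain \<psi> where "\<psi> \<in> congruences A F" "\<phi> \<psi> = top"
      using bij by (metis bij_betw_iff_bijections UNIV_I)
    ultimately have "\<phi> a = top" by (metis top.extremum_unique)
    then show False using a unfolding coatom_def by blast
  qed
  obtain x y where xy: "x \<in> A" "y \<in> A" "(x, y) \<notin> a1" using notfull a1 co1 by blast
  obtain u v where uv: "u \<in> A" "v \<in> A" "(u, v) \<notin> a2" using notfull a2 co2 by blast
  have e1: "equiv A a1" and e2: "equiv A a2" using a1 a2 unfolding congruences_def by auto
  have uva1: "(u, v) \<in> a1" using cover uv by blast
  have xya2: "(x, y) \<in> a2" using cover xy by blast
  have key: False if z: "z \<in> A" "(z, u) \<notin> a1" for z
  proof -
    have "(z, u) \<in> a2" using cover z \<open>u \<in> A\<close> by blast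
    moreover have "(z, v) \<in> a1 \<or> (z, v) \<in> a2" using cover z uv by blast
    ultimately show False
      using e1 e2 uva1 z(2) uv(3) unfolding equiv_def sym_def trans_def by blast
  qed
  have "(x, u) \<notin> a1 \<or> (y, u) \<notin> a1"
    using e1 xy(3) unfolding equiv_def sym_def trans_def by blast
  then show False using key xy by blast
qed

end
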